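(* Let $\Gamma$ be a weakly distance-regular digraph and let $q\ge3$ be an integer with $(1,q-1),(2,q-2)\in\tilde\partial(\Gamma)$. If $p_{(1,q-1),(1,q-1)}^{(2,q-2)}>0$, then every arc of type $(1,q-1)$ is contained in a circuit of length $q$ all of whose arcs are of type $(1,q-1)$.
   Context: Digraphs are finite and simple. $\partial(x,y)$ is the length of a shortest directed path from $x$ to $y$; $\tilde\partial(x,y)=(\partial(x,y),\partial(y,x))$; $\tilde\partial(\Gamma)$ is the set of all values $\tilde\partial(x,y)$; $\Gamma_{\tilde i}=\{(x,y):\tilde\partial(x,y)=\tilde i\}$. A strongly connected digraph $\Gamma$ is weakly distance-regular if $(V\Gamma,\{\Gamma_{\tilde i}\})$ is an association scheme, i.e. for all $\tilde i,\tilde j,\tilde l$ the number $p_{\tilde i,\tilde j}^{\tilde l}=|\{z:\tilde\partial(x,z)=\tilde i,\ \tilde\partial(z,y)=\tilde j\}|$ depends only on $\tilde l=\tilde\partial(x,y)$. An arc $(u,v)$ is of type $(1,r)$ if $\partial(v,u)=r$. A circuit of length $q$ is a closed directed path $(x_0,x_1,\dots,x_{q-1})$ with distinct vertices and arcs $(x_i,x_{i+1})$, indices mod $q$. *)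

theory Defs
  imports Main
begin

text \<open>A finite simple digraph: finite vertex set V, arc set A \<subseteq> V \<times> V, no loops
  (no parallel arcs is automatic for a relation).\<close>
definition digraph :: "'a set \<Rightarrow> ('a \<times> 'a) set \<Rightarrow> bool" where
  "digraph V A \<longleftrightarrow> finite V \<and> A \<subseteq> V \<times> V \<and> (\<forall>x. (x, x) \<notin> A)"

definition strongly_connected :: "'a set \<Rightarrow> ('a \<times> 'a) set \<Rightarrow> bool" where
  "strongly_connected V A \<longleftrightarrow> (\<forall>x\<in>V. \<forall>y\<in>V. (x, y) \<in> A\<^sup>*)"

definition dist :: "('a \<times> 'a) set \<Rightarrow> 'a \<Rightarrow> 'a \<Rightarrow> nat" where
  "dist A x y = (LEAST n. (x, y) \<in> A ^^ n)"

definition tdist :: "('a \<times> 'a) set \<Rightarrow> 'a \<Rightarrow> 'a \<Rightarrow> nat \<times> nat" where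
  "tdist A x y = (dist A x y, dist A y x)"

definition tdist_set :: "'a set \<Rightarrow> ('a \<times> 'a) set \<Rightarrow> (nat \<times> nat) set" where
  "tdist_set V A = {tdist A x y | x y. x \<in> V \<and> y \<in> V}"

definition pnum :: "'a set \<Rightarrow> ('a \<times> 'a) set \<Rightarrow> nat \<times> nat \<Rightarrow> nat \<times> nat \<Rightarrow> 'a \<Rightarrow> 'a \<Rightarrow> nat" where
  "pnum V A i j x y = card {z \<in> V. tdist A x z = i \<and> tdist A z y = j}"

text \<open>Weakly distance-regular: the distance partition is an association scheme, i.e.
  the numbers pnum depend only on tdist(x,y). (The remaining association-scheme
  axioms -- diagonal class, closure under transposition, partition -- hold automatically
  for the partition by two-way distance.)\<close>
definition weakly_distance_regular :: "'a set \<Rightarrow> ('a \<times> 'a) set \<Rightarrow> bool" where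
  "weakly_distance_regular V A \<longleftrightarrow> digraph V A \<and> strongly_connected V A \<and>
     (\<forall>i j x y x' y'. x \<in> V \<longrightarrow> y \<in> V \<longrightarrow> x' \<in> V \<longrightarrow> y' \<in> V \<longrightarrow>
        tdist A x y = tdist A x' y' \<longrightarrow> pnum V A i j x y = pnum V A i j x' y')"

text \<open>Intersection number p_{i,j}^l (well defined for weakly distance-regular digraphs
  and l in tdist_set).\<close>
definition pint :: "'a set \<Rightarrow> ('a \<times> 'a) set \<Rightarrow> nat \<times> nat \<Rightarrow> nat \<times> nat \<Rightarrow> nat \<times> nat \<Rightarrow> nat" where
  "pint V A i j l = (let (x, y) = (SOME (x, y). x \<in> V \<and> y \<in> V \<and> tdist A x y = l)
                      in pnum V A i j x y)"

definition arc_of_type :: "('a \<times> 'a) set \<Rightarrow> nat \<Rightarrow> 'a \<Rightarrow> 'a \<Rightarrow> bool" where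
  "arc_of_type A r u v \<longleftrightarrow> (u, v) \<in> A \<and> dist A v u = r"

definition circuit :: "('a \<times> 'a) set \<Rightarrow> 'a list \<Rightarrow> bool" where
  "circuit A xs \<longleftrightarrow> xs \<noteq> [] \<and> distinct xs \<and>
     (\<forall>i < length xs. (xs ! i, xs ! (Suc i mod length xs)) \<in> A)"

end

theory Submission
  imports Defs
begin

lemma dist_le: "(x, y) \<in> A ^^ n \<Longrightarrow> dist A x y \<le> n"
  unfolding dist_def by (rule Least_le)

lemma dist_pow: "(x, y) \<in> A\<^sup>* \<Longrightarrow> (x, y) \<in> A ^^ dist A x y"
  unfolding dist_def using rtrancl_power by (metis LeastI_ex)

lemma dist_tri:
  assumes "(x, y) \<in> A\<^sup>*" "(y, z) \<in> A\<^sup>*"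
  shows "dist A x z \<le> dist A x y + dist A y z"
proof -
  have "(x, z) \<in> A ^^ (dist A x y + dist A y z)"
    using dist_pow[OF assms(1)] dist_pow[OF assms(2)] relpow_add by blast
  then show ?thesis by (rule dist_le)
qed

lemma dist_self: "dist A x x = 0"
  using dist_le[where x=x and y=x and A=A and n=0] by simp

lemma dist0: "(x, y) \<in> A\<^sup>* \<Longrightarrow> dist A x y = 0 \<Longrightarrow> x = y"
  using dist_pow[of x y A] by simp

lemma dist1: "(x, y) \<in> A\<^sup>* \<Longrightarrow> dist A x y = 1 \<Longrightarrow> (x, y) \<in> A"
  using dist_pow[of x y A] by simp

lemma dist_arc: "(x, y) \<in> A \<Longrightarrow> x \<noteq> y \<Longrightarrow> dist A x y = 1"
proof -
  assume a: "(x, y) \<in> A" "x \<noteq> y"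
  have "dist A x y \<le> 1" using a by (intro dist_le) simp
  moreover have "dist A x y \<noteq> 0" using a dist0[of x y A] by auto
  ultimately show ?thesis by simp
qed

lemma walk_pow:
  assumes "\<forall>i<n. (f i, f (Suc i)) \<in> A"
  shows "i \<le> j \<Longrightarrow> j \<le> n \<Longrightarrow> (f i, f j) \<in> A ^^ (j - i)"
proof (induction j)
  case 0 then show ?case by simp
next
  case (Suc j)
  show ?case
  proof (cases "i = Suc j")
    case True then show ?thesis by simp
  next
    case False
    then have "(f i, f j) \<in> A ^^ (j - i)" using Suc by simp
    moreover have "(f j, f (Suc j)) \<in> A" using assms Suc by simp
    ultimately have "(f i, f (Suc j)) \<in> A ^^ Suc (j - i)" by (rule relpow_Suc_I)
    moreover have "Suc (j - i) = Suc j - i" using False Suc by simp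
    ultimately show ?thesis by simp
  qed
qed

lemma walkV:
  assumes sub: "A \<subseteq> V \<times> V" and W: "f 0 = u" "f q = u" "\<forall>i<q. (f i, f (Suc i)) \<in> A"
    and q: "q > 0" and i: "i \<le> q"
  shows "f i \<in> V"
proof (cases "i < q")
  case True then show ?thesis using W sub by blast
next
  case False
  then have "i = q" using i by simp
  then show ?thesis using W(1,2) W(3) q sub by (metis SigmaD1 subsetD)
qed

lemma geo:
  assumes reach: "\<forall>x\<in>V. \<forall>y\<in>V. (x, y) \<in> A\<^sup>*" and sub: "A \<subseteq> V \<times> V"
    and W: "f 0 = u" "f 1 = v" "f q = u" "\<forall>i<q. (f i, f (Suc i)) \<in> A"
    and duv: "dist A v u = q - 1" and q: "q \<ge> 1"
    and ij: "1 \<le> i" "i \<le> j" "j \<le> q"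
  shows "dist A (f i) (f j) = j - i"
proof -
  have V: "\<And>l. l \<le> q \<Longrightarrow> f l \<in> V" using walkV[OF sub W(1) W(3) W(4)] q by simp
  have le: "\<And>a b. a \<le> b \<Longrightarrow> b \<le> q \<Longrightarrow> dist A (f a) (f b) \<le> b - a"
    by (rule dist_le, rule walk_pow[OF W(4)])
  have Vs: "f 1 \<in> V" "f i \<in> V" "f j \<in> V" "f q \<in> V" using V ij by auto
  have "dist A (f 1) (f q) \<le> dist A (f 1) (f i) + dist A (f i) (f q)"
    using reach Vs by (intro dist_tri) auto
  also have "dist A (f i) (f q) \<le> dist A (f i) (f j) + dist A (f j) (f q)"
    using reach Vs by (intro dist_tri) auto
  finally have "q - 1 \<le> (i - 1) + dist A (f i) (f j) + (q - j)"
    using le[of 1 i] le[of j q] ij W duv by simp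
  then have "dist A (f i) (f j) \<ge> j - i" using ij by simp
  then show ?thesis using le[of i j] ij by simp
qed


lemma step_lemma:
  assumes reach: "\<forall>x\<in>V. \<forall>y\<in>V. (x, y) \<in> A\<^sup>*" and sub: "A \<subseteq> V \<times> V"
    and S2: "\<forall>a\<in>V. \<forall>b\<in>V. tdist A a b = (2, q - 2) \<longrightarrow>
              (\<exists>c\<in>V. tdist A a c = (1, q - 1) \<and> tdist A c b = (1, q - 1))"
    and q3: "q \<ge> 3" and duv: "dist A v u = q - 1"
    and W: "f 0 = u" "f 1 = v" "f q = u" "\<forall>i<q. (f i, f (Suc i)) \<in> A"
    and good: "\<forall>i<k. dist A (f (Suc i)) (f i) = q - 1"
    and k: "2 \<le> k" "k < q"
  shows "\<exists>g. g 0 = u \<and> g 1 = v \<and> g q = u \<and> (\<forall>i<q. (g i, g (Suc i)) \<in> A) \<and>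
             (\<forall>i<Suc k. dist A (g (Suc i)) (g i) = q - 1)"
proof -
  have V: "\<And>l. l \<le> q \<Longrightarrow> f l \<in> V" using walkV[OF sub W(1) W(3) W(4)] q3 by simp
  have d1: "dist A (f (k - 1)) (f (Suc k)) = 2"
    using geo[OF reach sub W duv, of "k - 1" "Suc k"] q3 k by simp
  have p1: "(f (Suc k), f q) \<in> A ^^ (q - Suc k)" using walk_pow[OF W(4)] k by simp
  have p2: "(f 0, f (k - 1)) \<in> A ^^ (k - 1 - 0)" using walk_pow[OF W(4), of 0 "k - 1"] k by simp
  have "(f (Suc k), f (k - 1)) \<in> A ^^ (q - Suc k) O A ^^ (k - 1)"
    using p1 p2 W(1,3) by auto
  then have "(f (Suc k), f (k - 1)) \<in> A ^^ (q - Suc k + (k - 1))"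
    by (simp add: relpow_add)
  moreover have "q - Suc k + (k - 1) = q - 2" using k by simp
  ultimately have u1: "dist A (f (Suc k)) (f (k - 1)) \<le> q - 2" using dist_le by metis
  have gk: "dist A (f k) (f (k - 1)) = q - 1" using good[rule_format, of "k - 1"] k by simp
  have "dist A (f k) (f (k - 1)) \<le> dist A (f k) (f (Suc k)) + dist A (f (Suc k)) (f (k - 1))"
    using reach V k by (intro dist_tri) auto
  moreover have "dist A (f k) (f (Suc k)) = 1" using geo[OF reach sub W duv, of k "Suc k"] k by simp
  ultimately have "dist A (f (Suc k)) (f (k - 1)) = q - 2" using gk u1 q3 by linarith
  then have td: "tdist A (f (k - 1)) (f (Suc k)) = (2, q - 2)" using d1 by (simp add: tdist_def)
  have fk1: "f (k - 1) \<in> V" "f (Suc k) \<in> V" using V k by auto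
  obtain c where c: "c \<in> V" "tdist A (f (k - 1)) c = (1, q - 1)" "tdist A c (f (Suc k)) = (1, q - 1)"
    using S2[rule_format, OF fk1 td] by blast
  have "dist A (f (k - 1)) c = 1" "dist A c (f (Suc k)) = 1" using c(2,3) by (simp_all add: tdist_def)
  moreover have "(f (k - 1), c) \<in> A\<^sup>*" "(c, f (Suc k)) \<in> A\<^sup>*" using c(1) fk1 reach by auto
  ultimately have ck: "(f (k - 1), c) \<in> A" "(c, f (Suc k)) \<in> A" using dist1 by auto
  define g where "g = f(k := c)"
  have "g 0 = u" "g 1 = v" "g q = u" using k W by (auto simp: g_def)
  moreover have "\<forall>i<q. (g i, g (Suc i)) \<in> A"
  proof (intro allI impI)
    fix i assume iq: "i < q"
    show "(g i, g (Suc i)) \<in> A"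
    proof (cases "i = k")
      case True then show ?thesis using ck(2) by (simp add: g_def)
    next
      case False
      show ?thesis
      proof (cases "Suc i = k")
        case True
        then have "i = k - 1" by simp
        then show ?thesis using ck(1) True by (simp add: g_def)
      next
        case False
        then show ?thesis using \<open>i \<noteq> k\<close> iq W(4) by (simp add: g_def)
      qed
    qed
  qed
  moreover have "\<forall>i<Suc k. dist A (g (Suc i)) (g i) = q - 1"
  proof (intro allI impI)
    fix i assume i: "i < Suc k"
    show "dist A (g (Suc i)) (g i) = q - 1"
    proof (cases "i = k")
      case True then show ?thesis using c(3) by (simp add: g_def tdist_def)
    next
      case False
      show ?thesis
      proof (cases "Suc i = k")
        case True
        then have "i = k - 1" by simp
        then show ?thesis using c(2) True by (simp add: g_def tdist_def)
      next
        case False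
        then have "i < k" using \<open>i \<noteq> k\<close> i by simp
        then show ?thesis using \<open>i \<noteq> k\<close> False good by (simp add: g_def)
      qed
    qed
  qed
  ultimately show ?thesis by (intro exI[of _ g]) simp
qed


theorem lemma2p6:
  fixes V :: "'a set" and A :: "('a \<times> 'a) set" and q :: nat
  assumes "weakly_distance_regular V A"
    and "q \<ge> 3"
    and "(1, q - 1) \<in> tdist_set V A"
    and "(2, q - 2) \<in> tdist_set V A"
    and "pint V A (1, q - 1) (1, q - 1) (2, q - 2) > 0"
  shows "\<forall>u v. arc_of_type A (q - 1) u v \<longrightarrow>
           (\<exists>xs. circuit A xs \<and> length xs = q \<and>
                 (\<exists>i < q. xs ! i = u \<and> xs ! (Suc i mod q) = v) \<and>
                 (\<forall>i < q. arc_of_type A (q - 1) (xs ! i) (xs ! (Suc i mod q))))"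
proof (intro allI impI)
  fix u v assume uv: "arc_of_type A (q - 1) u v"
  have fin: "finite V" and sub: "A \<subseteq> V \<times> V" and noloop: "\<forall>x. (x, x) \<notin> A"
    using assms(1) by (auto simp: weakly_distance_regular_def digraph_def)
  have reach: "\<forall>x\<in>V. \<forall>y\<in>V. (x, y) \<in> A\<^sup>*"
    using assms(1) by (simp add: weakly_distance_regular_def strongly_connected_def)
  have reg: "\<And>i j x y x' y'. x \<in> V \<Longrightarrow> y \<in> V \<Longrightarrow> x' \<in> V \<Longrightarrow> y' \<in> V \<Longrightarrow>
        tdist A x y = tdist A x' y' \<Longrightarrow> pnum V A i j x y = pnum V A i j x' y'"
    using assms(1) unfolding weakly_distance_regular_def by blast
  have q3: "q \<ge> 3" by (rule assms(2))
  define P where "P = (\<lambda>(x, y). x \<in> V \<and> y \<in> V \<and> tdist A x y = (2, q - 2))"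
  obtain a0 b0 where "a0 \<in> V" "b0 \<in> V" "tdist A a0 b0 = (2, q - 2)"
    using assms(4) unfolding tdist_set_def by auto
  then have "P (a0, b0)" by (simp add: P_def)
  then have exP: "\<exists>p. P p" by blast
  obtain x0 y0 where xy: "(SOME p. P p) = (x0, y0)" by (cases "SOME p. P p") auto
  have Pxy: "P (x0, y0)" using someI_ex[OF exP] xy by simp
  then have x0: "x0 \<in> V" and y0: "y0 \<in> V" and txy: "tdist A x0 y0 = (2, q - 2)"
    by (auto simp: P_def)
  have "pint V A (1, q - 1) (1, q - 1) (2, q - 2) = pnum V A (1, q - 1) (1, q - 1) x0 y0"
    unfolding pint_def using xy by (simp add: P_def)
  then have pos: "pnum V A (1, q - 1) (1, q - 1) x0 y0 > 0" using assms(5) by simp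
  then obtain z0 where z0: "z0 \<in> V" "tdist A x0 z0 = (1, q - 1)" "tdist A z0 y0 = (1, q - 1)"
    unfolding pnum_def by (metis (mono_tags, lifting) card.empty empty_Collect_eq less_irrefl)
  have S2: "\<forall>a\<in>V. \<forall>b\<in>V. tdist A a b = (2, q - 2) \<longrightarrow>
              (\<exists>c\<in>V. tdist A a c = (1, q - 1) \<and> tdist A c b = (1, q - 1))"
  proof (intro ballI impI)
    fix a b assume ab: "a \<in> V" "b \<in> V" "tdist A a b = (2, q - 2)"
    have "pnum V A (1, q - 1) (1, q - 1) a b = pnum V A (1, q - 1) (1, q - 1) x0 y0"
      using reg ab x0 y0 txy by metis
    then have "pnum V A (1, q - 1) (1, q - 1) a b > 0" using pos by simp
    then show "\<exists>c\<in>V. tdist A a c = (1, q - 1) \<and> tdist A c b = (1, q - 1)"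
      unfolding pnum_def by (metis (mono_tags, lifting) card.empty empty_Collect_eq less_irrefl)
  qed
  have uvA: "(u, v) \<in> A" and dvu: "dist A v u = q - 1" using uv by (auto simp: arc_of_type_def)
  have uV: "u \<in> V" and vV: "v \<in> V" using uvA sub by auto
  have "u \<noteq> v" using uvA noloop by auto
  then have "dist A u v = 1" using uvA dist_arc by metis
  then have tuv: "tdist A u v = (1, q - 1)" using dvu by (simp add: tdist_def)
  have "y0 \<in> {z \<in> V. tdist A x0 z = (2, q - 2) \<and> tdist A z z0 = (q - 1, 1)}"
    using y0 txy z0 by (auto simp: tdist_def)
  then have "pnum V A (2, q - 2) (q - 1, 1) x0 z0 > 0"
    unfolding pnum_def using fin by (metis (no_types, lifting) card_gt_0_iff empty_iff mem_Collect_eq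
        finite_subset subsetI)
  moreover have "pnum V A (2, q - 2) (q - 1, 1) u v = pnum V A (2, q - 2) (q - 1, 1) x0 z0"
    using reg uV vV x0 z0 tuv by metis
  ultimately have "pnum V A (2, q - 2) (q - 1, 1) u v > 0" by simp
  then obtain w where w: "w \<in> V" "tdist A u w = (2, q - 2)" "tdist A w v = (q - 1, 1)"
    unfolding pnum_def by (metis (mono_tags, lifting) card.empty empty_Collect_eq less_irrefl)
  have dwu: "dist A w u = q - 2" and dvw: "dist A v w = 1" and dwv: "dist A w v = q - 1"
    using w by (auto simp: tdist_def)
  have vw: "(v, w) \<in> A" using dist1[of v w A] dvw reach vV w(1) by auto
  have "(w, u) \<in> A ^^ (q - 2)" using dist_pow[of w u A] dwu reach w(1) uV by auto
  then obtain h where h: "h 0 = w" "h (q - 2) = u" "\<forall>i<q - 2. (h i, h (Suc i)) \<in> A"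
    unfolding relpow_fun_conv by blast
  define f0 where "f0 = (\<lambda>i. if i = 0 then u else if i = 1 then v else h (i - 2))"
  have W0: "f0 0 = u" "f0 1 = v" "f0 q = u" using q3 h by (auto simp: f0_def)
  have W0a: "\<forall>i<q. (f0 i, f0 (Suc i)) \<in> A"
  proof (intro allI impI)
    fix i assume iq: "i < q"
    show "(f0 i, f0 (Suc i)) \<in> A"
    proof (cases "i = 0")
      case True then show ?thesis using uvA by (simp add: f0_def)
    next
      case False
      show ?thesis
      proof (cases "i = 1")
        case True then show ?thesis using vw h(1) by (simp add: f0_def)
      next
        case False
        then have "i - 2 < q - 2" "Suc i - 2 = Suc (i - 2)" using \<open>i \<noteq> 0\<close> iq by auto
        then show ?thesis using h(3) False \<open>i \<noteq> 0\<close> by (simp add: f0_def)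
      qed
    qed
  qed
  have G0: "\<forall>i<2. dist A (f0 (Suc i)) (f0 i) = q - 1"
  proof (intro allI impI)
    fix i :: nat assume "i < 2"
    then have "i = 0 \<or> i = 1" by auto
    then show "dist A (f0 (Suc i)) (f0 i) = q - 1"
      using dvu dwv h(1) by (auto simp: f0_def)
  qed
  have main: "\<exists>f. f 0 = u \<and> f 1 = v \<and> f q = u \<and> (\<forall>i<q. (f i, f (Suc i)) \<in> A) \<and>
             (\<forall>i<k. dist A (f (Suc i)) (f i) = q - 1)" if "2 \<le> k" "k \<le> q" for k
    using that
  proof (induction k rule: dec_induct)
    case base
    have "f0 0 = u \<and> f0 1 = v \<and> f0 q = u \<and> (\<forall>i<q. (f0 i, f0 (Suc i)) \<in> A) \<and>
             (\<forall>i<2. dist A (f0 (Suc i)) (f0 i) = q - 1)" using W0 W0a G0 by simp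
    then show ?case by (rule exI[where x=f0])
  next
    case (step n)
    have nq: "n \<le> q" using step(4) by simp
    from step(3)[OF nq] obtain f where f: "f 0 = u" "f 1 = v" "f q = u" "\<forall>i<q. (f i, f (Suc i)) \<in> A"
      "\<forall>i<n. dist A (f (Suc i)) (f i) = q - 1" by (elim exE conjE) simp
    show ?case using step(1,4) by (intro step_lemma[OF reach sub S2 q3 dvu f]) auto
  qed
  obtain f where f: "f 0 = u" "f 1 = v" "f q = u" "\<forall>i<q. (f i, f (Suc i)) \<in> A"
      "\<forall>i<q. dist A (f (Suc i)) (f i) = q - 1"
    using main[of q] q3 by auto
  define xs where "xs = map f [0..<q]"
  have len: "length xs = q" by (simp add: xs_def)
  have nth: "\<And>i. i < q \<Longrightarrow> xs ! i = f i" by (simp add: xs_def)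
  have nxt: "\<And>i. i < q \<Longrightarrow> xs ! (Suc i mod q) = f (Suc i)"
  proof -
    fix i assume iq: "i < q"
    show "xs ! (Suc i mod q) = f (Suc i)"
    proof (cases "Suc i = q")
      case True then show ?thesis using f(1,3) nth q3 by simp
    next
      case False then have "Suc i < q" using iq by simp
      then show ?thesis using nth by simp
    qed
  qed
  have geoq: "\<And>i j. 1 \<le> i \<Longrightarrow> i \<le> j \<Longrightarrow> j \<le> q \<Longrightarrow> dist A (f i) (f j) = j - i"
    using geo[OF reach sub f(1,2,3,4) dvu] q3 by simp
  have inj: "inj_on f {0..<q}"
  proof (rule inj_onI)
    fix i j assume i: "i \<in> {0..<q}" and j: "j \<in> {0..<q}" and e: "f i = f j"
    show "i = j"
    proof (rule ccontr)
      assume ne: "i \<noteq> j"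
      have key: "\<And>a b. a < b \<Longrightarrow> b < q \<Longrightarrow> f a = f b \<Longrightarrow> False"
      proof -
        fix a b assume ab: "a < b" "b < q" "f a = f b"
        show False
        proof (cases "a = 0")
          case True
          then have "f b = f q" using ab f(1,3) by simp
          moreover have "dist A (f b) (f q) = q - b" using geoq[of b q] ab True by simp
          ultimately show False using dist_self[of A "f q"] ab by simp
        next
          case False
          have "dist A (f a) (f b) = b - a" using geoq[of a b] ab False by simp
          then show False using ab dist_self[of A "f b"] by simp
        qed
      qed
      show False
      proof (cases "i < j")
        case True then show False using key[of i j] j e by simp
      next
        case False then have "j < i" using ne by simp
        then show False using key[of j i] i e by simp
      qed
    qed
  qed
  have circ: "circuit A xs"
    unfolding circuit_def
  proof (intro conjI allI impI)
    show "xs \<noteq> []" using len q3 by auto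
    show "distinct xs" unfolding xs_def using inj by (simp add: distinct_map)
  next
    fix i assume "i < length xs"
    then have "i < q" using len by simp
    then show "(xs ! i, xs ! (Suc i mod length xs)) \<in> A" using nth nxt f(4) len by simp
  qed
  show "\<exists>xs. circuit A xs \<and> length xs = q \<and>
                 (\<exists>i < q. xs ! i = u \<and> xs ! (Suc i mod q) = v) \<and>
                 (\<forall>i < q. arc_of_type A (q - 1) (xs ! i) (xs ! (Suc i mod q)))"
  proof (intro exI[of _ xs] conjI)
    show "circuit A xs" by (rule circ)
    show "length xs = q" by (rule len)
    show "\<exists>i < q. xs ! i = u \<and> xs ! (Suc i mod q) = v"
      using nth[of 0] nxt[of 0] f(1,2) q3 by (intro exI[of _ 0]) simp
    show "\<forall>i < q. arc_of_type A (q - 1) (xs ! i) (xs ! (Suc i mod q))"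
      using nth nxt f(4,5) by (simp add: arc_of_type_def)
  qed
qed

end
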